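(* Let $\mathcal{P}$ be a collection of cells. Let $a=(i,j)$, $b=(k,l)$ and $\delta=(m,n)$ with $i<m<k$ and $j<n<l$, and suppose $[a,b]$ is an inner interval of $\mathcal{P}$ (hence so is $[\alpha,\beta]$ with $\alpha=(i,n)$, $\beta=(m,l)$, whose upper left corner $\gamma$ equals the upper left corner $c=(i,l)$ of $[a,b]$). Put $d=(k,j)$, $h=(m,j)$, $r=(k,n)$. Let $<^{\mathsf{P}}$ be a $\mathsf{P}$-order on $V(\mathcal{P})$ and suppose that the leading monomials of $f_{a,b}$ and $f_{\alpha,\beta}$ with respect to $<^{\mathsf{P}}_{\mathrm{lex}}$ are not coprime. Then $S(f_{a,b},f_{\alpha,\beta})$ reduces to $0$ modulo $\mathcal{G}$ with respect to $<^{\mathsf{P}}_{\mathrm{lex}}$ if and only if one of the following holds: (1) $x_dx_\alpha x_\beta<^{\mathsf{P}}_{\mathrm{lex}}x_\delta x_ax_b$, and ($h,\alpha<^{\mathsf{P}}a$ or $h,\alpha<^{\mathsf{P}}\delta$); (2) $x_dx_\alpha x_\beta<^{\mathsf{P}}_{\mathrm{lex}}x_\delta x_ax_b$, and ($r,\beta<^{\mathsf{P}}\delta$ or $r,\beta<^{\mathsf{P}}b$); (3) $x_\delta x_ax_b<^{\mathsf{P}}_{\mathrm{lex}}x_dx_\alpha x_\beta$, and ($r,a<^{\mathsf{P}}\alpha$ or $r,a<^{\mathsf{P}}d$); (4) $x_\delta x_ax_b<^{\mathsf{P}}_{\mathrm{lex}}x_dx_\alpha x_\beta$, and ($h,b<^{\mathsf{P}}d$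 or $h,b<^{\mathsf{P}}\beta$).
   Context: For $a=(i,j), b=(k,l)\in\mathbb{Z}^2$ with $a\le b$ componentwise, the interval $[a,b]=\{(m,n)\in\mathbb{Z}^2: i\le m\le k,\ j\le n\le l\}$; it is proper if $i<k$ and $j<l$, in which case $a,b$ are its diagonal corners and $(i,l)$ (upper left), $(k,j)$ (lower right) its anti-diagonal corners. A cell is a proper interval $[v,v+(1,1)]$; its vertices are its four corners. A collection of cells $\mathcal{P}$ is a nonempty finite set of cells; $V(\mathcal{P})$ is the set of all vertices of its cells. A proper interval $[a,b]$ is an inner interval of $\mathcal{P}$ if every cell $[v,v+(1,1)]\subseteq[a,b]$ belongs to $\mathcal{P}$. Let $K$ be a field and $S=K[x_v: v\in V(\mathcal{P})]$. For an inner interval $[a,b]$ with upper left corner $c$ and lower right corner $d$, put $f_{a,b}=x_ax_b-x_cx_d$; $\mathcal{G}$ is the set of all such inner 2-minors of $\mathcal{P}$. A $\mathsf{P}$-order is a total order $<^{\mathsf{P}}$ on $V(\mathcal{P})$; $<^{\mathsf{P}}_{\mathrm{lex}}$ is the lexicographic monomial order on $S$ with $x_u<x_v\iff u<^{\mathsf{P}}v$. For vertices $u,v,w$, "$u,v<^{\mathsf{P}}w$" means $u<^{\mathsf{P}}w$ and $v<^{\mathsf{P}}w$. *)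

theory Defs
  imports "HOL-Library.Poly_Mapping"
begin

type_synonym vert = "int \<times> int"
type_synonym mon = "vert \<Rightarrow>\<^sub>0 nat"
type_synonym 'k pol = "mon \<Rightarrow>\<^sub>0 'k"

text \<open>A cell [v, v+(1,1)] is represented by its lower left corner v;
  a collection of cells is a finite nonempty set of such corners.\<close>

definition collection_of_cells :: "vert set \<Rightarrow> bool" where
  "collection_of_cells P \<longleftrightarrow> finite P \<and> P \<noteq> {}"

definition vertices :: "vert set \<Rightarrow> vert set" where
  "vertices P = {(fst v + e1, snd v + e2) | v e1 e2. v \<in> P \<and> e1 \<in> {0,1} \<and> e2 \<in> {0,1}}"

definition inner_interval :: "vert set \<Rightarrow> vert \<Rightarrow> vert \<Rightarrow> bool" where
  "inner_interval P a b \<longleftrightarrow> fst a < fst b \<and> snd a < snd b \<and>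
     (\<forall>v. fst a \<le> fst v \<and> fst v + 1 \<le> fst b \<and> snd a \<le> snd v \<and> snd v + 1 \<le> snd b \<longrightarrow> v \<in> P)"

definition P_order :: "vert set \<Rightarrow> (vert \<Rightarrow> vert \<Rightarrow> bool) \<Rightarrow> bool" where
  "P_order P lt \<longleftrightarrow>
     (\<forall>u\<in>vertices P. \<not> lt u u) \<and>
     (\<forall>u\<in>vertices P. \<forall>v\<in>vertices P. \<forall>w\<in>vertices P. lt u v \<longrightarrow> lt v w \<longrightarrow> lt u w) \<and>
     (\<forall>u\<in>vertices P. \<forall>v\<in>vertices P. u \<noteq> v \<longrightarrow> lt u v \<or> lt v u)"

definition var :: "vert \<Rightarrow> ('k::{zero,one}) pol" where
  "var v = Poly_Mapping.single (Poly_Mapping.single v 1) 1"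

definition mvar :: "vert \<Rightarrow> mon" where
  "mvar v = Poly_Mapping.single v 1"

definition in_S :: "vert set \<Rightarrow> ('k::zero) pol \<Rightarrow> bool" where
  "in_S P (f :: (_::zero) pol) \<longleftrightarrow> (\<forall>mo\<in>Poly_Mapping.keys f. Poly_Mapping.keys (mo::mon) \<subseteq> vertices P)"

text \<open>Lexicographic order on monomials induced by the variable order
  (x_u < x_v iff u < v): compare exponents at the largest variable where they differ.\<close>
definition lex_less :: "(vert \<Rightarrow> vert \<Rightarrow> bool) \<Rightarrow> mon \<Rightarrow> mon \<Rightarrow> bool" where
  "lex_less lt m1 m2 \<longleftrightarrow>
     (\<exists>v. Poly_Mapping.lookup m1 v < Poly_Mapping.lookup m2 v \<and> (\<forall>w. lt v w \<longrightarrow> Poly_Mapping.lookup m1 w = Poly_Mapping.lookup m2 w))"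

definition lex_le :: "(vert \<Rightarrow> vert \<Rightarrow> bool) \<Rightarrow> mon \<Rightarrow> mon \<Rightarrow> bool" where
  "lex_le lt m1 m2 \<longleftrightarrow> m1 = m2 \<or> lex_less lt m1 m2"

definition lead_mon :: "(vert \<Rightarrow> vert \<Rightarrow> bool) \<Rightarrow> ('k::zero) pol \<Rightarrow> mon" where
  "lead_mon lt f = (THE m. m \<in> Poly_Mapping.keys f \<and> (\<forall>m'\<in>Poly_Mapping.keys f. m' \<noteq> m \<longrightarrow> lex_less lt m' m))"

definition lead_coeff :: "(vert \<Rightarrow> vert \<Rightarrow> bool) \<Rightarrow> ('k::zero) pol \<Rightarrow> 'k" where
  "lead_coeff lt f = Poly_Mapping.lookup f (lead_mon lt f)"

definition mon_lcm :: "mon \<Rightarrow> mon \<Rightarrow> mon" where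
  "mon_lcm m1 m2 = Abs_poly_mapping (\<lambda>v. max (Poly_Mapping.lookup m1 v) (Poly_Mapping.lookup m2 v))"

definition coprime_mon :: "mon \<Rightarrow> mon \<Rightarrow> bool" where
  "coprime_mon m1 m2 \<longleftrightarrow> (\<forall>v. Poly_Mapping.lookup m1 v = 0 \<or> Poly_Mapping.lookup m2 v = 0)"

definition spoly :: "(vert \<Rightarrow> vert \<Rightarrow> bool) \<Rightarrow> ('k::field) pol \<Rightarrow> 'k pol \<Rightarrow> 'k pol" where
  "spoly lt f g =
     (let L = mon_lcm (lead_mon lt f) (lead_mon lt g) in
      Poly_Mapping.single (L - lead_mon lt f) (1 / lead_coeff lt f) * f
      - Poly_Mapping.single (L - lead_mon lt g) (1 / lead_coeff lt g) * g)"

text \<open>f_{a,b} = x_a x_b - x_c x_d with c the upper left, d the lower right corner.\<close>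
definition fmin :: "vert \<Rightarrow> vert \<Rightarrow> ('k::comm_ring_1) pol" where
  "fmin a b = var a * var b - var (fst a, snd b) * var (fst b, snd a)"

definition inner_minors :: "vert set \<Rightarrow> ('k::comm_ring_1) pol set" where
  "inner_minors P = {fmin a b | a b. inner_interval P a b}"

text \<open>f reduces to 0 modulo G (Herzog--Hibi): f has a standard expression
  f = \<Sum> q_g g with remainder 0, i.e. in(q_g g) \<le> in(f) whenever q_g g \<noteq> 0.\<close>
definition reduces_to_zero ::
  "vert set \<Rightarrow> (vert \<Rightarrow> vert \<Rightarrow> bool) \<Rightarrow> ('k::comm_ring_1) pol set \<Rightarrow> 'k pol \<Rightarrow> bool" where
  "reduces_to_zero P lt G f \<longleftrightarrow>
     (\<exists>H q. finite H \<and> H \<subseteq> G \<and> (\<forall>g\<in>H. in_S P (q g)) \<and>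
        f = (\<Sum>g\<in>H. q g * g) \<and>
        (\<forall>g\<in>H. q g * g \<noteq> 0 \<longrightarrow> lex_le lt (lead_mon lt (q g * g)) (lead_mon lt f)))"

end

theory Submission
  imports Defs
begin

lemma lookup_mvar: "Poly_Mapping.lookup (mvar v) w = (if v = w then 1 else 0)"
  by (simp add: mvar_def lookup_single when_def)

lemma keys_mvar[simp]: "Poly_Mapping.keys (mvar v) = {v}"
  by (simp add: mvar_def)

lemma var_eq: "var v = Poly_Mapping.single (mvar v) 1"
  by (simp add: var_def mvar_def)

lemma fmin_eq: "fmin a b = Poly_Mapping.single (mvar a + mvar b) 1
   - Poly_Mapping.single (mvar (fst a, snd b) + mvar (fst b, snd a)) (1::'k::comm_ring_1)"
  by (simp add: fmin_def var_eq mult_single)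

lemma PO_irrefl: "P_order P lt \<Longrightarrow> u \<in> vertices P \<Longrightarrow> \<not> lt u u"
  by (simp add: P_order_def)
lemma PO_trans: "P_order P lt \<Longrightarrow> u \<in> vertices P \<Longrightarrow> v \<in> vertices P \<Longrightarrow> w \<in> vertices P
   \<Longrightarrow> lt u v \<Longrightarrow> lt v w \<Longrightarrow> lt u w"
  unfolding P_order_def by blast
lemma PO_total: "P_order P lt \<Longrightarrow> u \<in> vertices P \<Longrightarrow> v \<in> vertices P \<Longrightarrow> u \<noteq> v
   \<Longrightarrow> lt u v \<or> lt v u"
  unfolding P_order_def by blast

lemma lex_less_trans:
  assumes PO: "P_order P lt" and K: "Poly_Mapping.keys m1 \<subseteq> vertices P" "Poly_Mapping.keys m2 \<subseteq> vertices P"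
    "Poly_Mapping.keys m3 \<subseteq> vertices P"
    and l1: "lex_less lt m1 m2" and l2: "lex_less lt m2 m3"
  shows "lex_less lt m1 m3"
proof -
  obtain v where v: "Poly_Mapping.lookup m1 v < Poly_Mapping.lookup m2 v"
    "\<forall>w. lt v w \<longrightarrow> Poly_Mapping.lookup m1 w = Poly_Mapping.lookup m2 w"
    using l1 unfolding lex_less_def by blast
  obtain w where w: "Poly_Mapping.lookup m2 w < Poly_Mapping.lookup m3 w"
    "\<forall>x. lt w x \<longrightarrow> Poly_Mapping.lookup m2 x = Poly_Mapping.lookup m3 x"
    using l2 unfolding lex_less_def by blast
  have vV: "v \<in> vertices P" using v(1) K(2) by (auto simp: in_keys_iff)
  have wV: "w \<in> vertices P" using w(1) K(3) by (auto simp: in_keys_iff)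
  have out: "Poly_Mapping.lookup m1 x = Poly_Mapping.lookup m2 x \<and> Poly_Mapping.lookup m2 x = Poly_Mapping.lookup m3 x"
    if "x \<notin> vertices P" for x
    using that K by (metis in_keys_iff subsetD)
  consider "v = w" | "lt v w" | "lt w v" using PO_total[OF PO vV wV] by blast
  then show ?thesis
  proof cases
    case 1
    show ?thesis unfolding lex_less_def
    proof (intro exI conjI allI impI)
      show "Poly_Mapping.lookup m1 v < Poly_Mapping.lookup m3 v" using v(1) w(1) 1 by simp
      fix x assume "lt v x"
      have "Poly_Mapping.lookup m1 x = Poly_Mapping.lookup m2 x" using v(2)[rule_format, OF \<open>lt v x\<close>] .
      moreover have "Poly_Mapping.lookup m2 x = Poly_Mapping.lookup m3 x" using w(2)[rule_format, of x] \<open>lt v x\<close> 1 by simp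
      ultimately show "Poly_Mapping.lookup m1 x = Poly_Mapping.lookup m3 x" by simp
    qed
  next
    case 2
    show ?thesis unfolding lex_less_def
    proof (intro exI conjI allI impI)
      show "Poly_Mapping.lookup m1 w < Poly_Mapping.lookup m3 w" using v(2)[rule_format, OF 2] w(1) by simp
      fix x assume "lt w x"
      show "Poly_Mapping.lookup m1 x = Poly_Mapping.lookup m3 x"
      proof (cases "x \<in> vertices P")
        case True then have "lt v x" using PO_trans[OF PO vV wV True 2 \<open>lt w x\<close>] by blast
        have "Poly_Mapping.lookup m1 x = Poly_Mapping.lookup m2 x" using v(2)[rule_format, OF \<open>lt v x\<close>] .
        moreover have "Poly_Mapping.lookup m2 x = Poly_Mapping.lookup m3 x" using w(2)[rule_format, OF \<open>lt w x\<close>] .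
        ultimately show ?thesis by simp
      next
        case False then show ?thesis using out[OF False] by simp
      qed
    qed
  next
    case 3
    show ?thesis unfolding lex_less_def
    proof (intro exI conjI allI impI)
      show "Poly_Mapping.lookup m1 v < Poly_Mapping.lookup m3 v" using v(1) w(2)[rule_format, OF 3] by simp
      fix x assume "lt v x"
      show "Poly_Mapping.lookup m1 x = Poly_Mapping.lookup m3 x"
      proof (cases "x \<in> vertices P")
        case True then have "lt w x" using PO_trans[OF PO wV vV True 3 \<open>lt v x\<close>] by blast
        have "Poly_Mapping.lookup m1 x = Poly_Mapping.lookup m2 x" using v(2)[rule_format, OF \<open>lt v x\<close>] .
        moreover have "Poly_Mapping.lookup m2 x = Poly_Mapping.lookup m3 x" using w(2)[rule_format, OF \<open>lt w x\<close>] .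
        ultimately show ?thesis by simp
      next
        case False then show ?thesis using out[OF False] by simp
      qed
    qed
  qed
qed

lemma lex_less_irrefl: "\<not> lex_less lt m m"
  by (simp add: lex_less_def)

lemma lex_less_add: "lex_less lt m1 m2 \<Longrightarrow> lex_less lt (m1 + p) (m2 + p)"
  unfolding lex_less_def by (auto simp: lookup_add)

lemma lex_less_add_left: "lex_less lt m1 m2 \<Longrightarrow> lex_less lt (p + m1) (p + m2)"
  unfolding lex_less_def by (auto simp: lookup_add)

lemma exists_max_vert:
  assumes PO: "P_order P lt" and "finite D" "D \<noteq> {}" "D \<subseteq> vertices P"
  shows "\<exists>v\<in>D. \<forall>w\<in>D. \<not> lt v w"
  using assms(2,3,4)
proof (induction D rule: finite_ne_induct)
  case (singleton x) then show ?case using PO_irrefl[OF PO] by auto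
next
  case (insert x F)
  then obtain v where v: "v \<in> F" "\<forall>w\<in>F. \<not> lt v w" by auto
  show ?case
  proof (cases "lt v x")
    case True
    have "\<forall>w\<in>insert x F. \<not> lt x w"
    proof
      fix w assume w: "w \<in> insert x F"
      show "\<not> lt x w"
      proof
        assume "lt x w"
        show False
        proof (cases "w = x")
          case True then show False using \<open>lt x w\<close> PO_irrefl[OF PO] insert by auto
        next
          case False
          then have "w \<in> F" using w by auto
          have VV: "v \<in> vertices P" "x \<in> vertices P" "w \<in> vertices P"
            using insert.prems v(1) \<open>w \<in> F\<close> by auto
          have "lt v w" using PO_trans[OF PO VV True \<open>lt x w\<close>] .
          then show False using v \<open>w \<in> F\<close> by auto
        qed
      qed
    qed
    then show ?thesis by auto
  next
    case False then show ?thesis using v by auto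
  qed
qed

lemma lex_total:
  assumes PO: "P_order P lt" and K: "Poly_Mapping.keys m1 \<subseteq> vertices P" "Poly_Mapping.keys m2 \<subseteq> vertices P"
    and ne: "m1 \<noteq> m2"
  shows "lex_less lt m1 m2 \<or> lex_less lt m2 m1"
proof -
  let ?D = "{v. Poly_Mapping.lookup m1 v \<noteq> Poly_Mapping.lookup m2 v}"
  have sub: "?D \<subseteq> Poly_Mapping.keys m1 \<union> Poly_Mapping.keys m2" by (auto simp: in_keys_iff)
  have fin: "finite ?D" using finite_subset[OF sub] by simp
  have nemp: "?D \<noteq> {}"
  proof
    assume "?D = {}"
    then have "m1 = m2" by (intro poly_mapping_eqI) auto
    with ne show False ..
  qed
  have DV: "?D \<subseteq> vertices P" using sub K by blast
  obtain v where v: "v \<in> ?D" "\<forall>w\<in>?D. \<not> lt v w"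
    using exists_max_vert[OF PO fin nemp DV] by blast
  have eq: "\<forall>w. lt v w \<longrightarrow> Poly_Mapping.lookup m1 w = Poly_Mapping.lookup m2 w" using v(2) by auto
  show ?thesis
  proof (cases "Poly_Mapping.lookup m1 v < Poly_Mapping.lookup m2 v")
    case True then show ?thesis using eq unfolding lex_less_def by blast
  next
    case False
    then have "Poly_Mapping.lookup m2 v < Poly_Mapping.lookup m1 v" using v(1) by auto
    then show ?thesis using eq unfolding lex_less_def by (metis)
  qed
qed


lemma lex_le_trans:
  assumes PO: "P_order P lt" and K: "Poly_Mapping.keys m1 \<subseteq> vertices P" "Poly_Mapping.keys m2 \<subseteq> vertices P"
    "Poly_Mapping.keys m3 \<subseteq> vertices P"
    and l1: "lex_le lt m1 m2" and l2: "lex_le lt m2 m3"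
  shows "lex_le lt m1 m3"
  using l1 l2 lex_less_trans[OF PO K] unfolding lex_le_def by blast

lemma lex_less_le_trans:
  assumes PO: "P_order P lt" and K: "Poly_Mapping.keys m1 \<subseteq> vertices P" "Poly_Mapping.keys m2 \<subseteq> vertices P"
    "Poly_Mapping.keys m3 \<subseteq> vertices P"
    and l1: "lex_less lt m1 m2" and l2: "lex_le lt m2 m3"
  shows "lex_less lt m1 m3"
  using l1 l2 lex_less_trans[OF PO K] unfolding lex_le_def by blast

lemma exists_max_mon:
  assumes PO: "P_order P lt" and "finite K" "K \<noteq> {}" "\<forall>m\<in>K. Poly_Mapping.keys m \<subseteq> vertices P"
  shows "\<exists>m\<in>K. \<forall>m'\<in>K. m' \<noteq> m \<longrightarrow> lex_less lt m' m"
  using assms(2,3,4)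
proof (induction K rule: finite_ne_induct)
  case (singleton x) then show ?case by auto
next
  case (insert x F)
  then obtain m where m: "m \<in> F" "\<forall>m'\<in>F. m' \<noteq> m \<longrightarrow> lex_less lt m' m" by auto
  have xV: "Poly_Mapping.keys x \<subseteq> vertices P" using insert.prems by auto
  have mV: "Poly_Mapping.keys m \<subseteq> vertices P" using insert.prems m(1) by auto
  show ?case
  proof (cases "x = m")
    case True then show ?thesis using m by auto
  next
    case False
    then consider "lex_less lt x m" | "lex_less lt m x" using lex_total[OF PO xV mV] by blast
    then show ?thesis
    proof cases
      case 1 then show ?thesis using m by auto
    next
      case 2
      have "\<forall>m'\<in>insert x F. m' \<noteq> x \<longrightarrow> lex_less lt m' x"
      proof (intro ballI impI)
        fix m' assume "m' \<in> insert x F" "m' \<noteq> x"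
        then have m'F: "m' \<in> F" by auto
        show "lex_less lt m' x"
        proof (cases "m' = m")
          case True then show ?thesis using 2 by simp
        next
          case False
          then have "lex_less lt m' m" using m m'F by blast
          moreover have "Poly_Mapping.keys m' \<subseteq> vertices P" using insert.prems m'F by auto
          ultimately show ?thesis using lex_less_trans[OF PO _ mV xV _ 2] by blast
        qed
      qed
      then show ?thesis by blast
    qed
  qed
qed

lemma lead_mon_eq:
  assumes PO: "P_order P lt" and m: "m \<in> Poly_Mapping.keys f"
    and mx: "\<forall>m'\<in>Poly_Mapping.keys f. m' \<noteq> m \<longrightarrow> lex_less lt m' m"
    and V: "\<forall>m\<in>Poly_Mapping.keys f. Poly_Mapping.keys m \<subseteq> vertices P"
  shows "lead_mon lt f = m"
  unfolding lead_mon_def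
proof (rule the_equality)
  show "m \<in> Poly_Mapping.keys f \<and> (\<forall>m'\<in>Poly_Mapping.keys f. m' \<noteq> m \<longrightarrow> lex_less lt m' m)"
    using m mx by blast
  fix m2 assume h: "m2 \<in> Poly_Mapping.keys f \<and> (\<forall>m'\<in>Poly_Mapping.keys f. m' \<noteq> m2 \<longrightarrow> lex_less lt m' m2)"
  show "m2 = m"
  proof (rule ccontr)
    assume ne: "m2 \<noteq> m"
    then have 1: "lex_less lt m2 m" using mx h by blast
    have 2: "lex_less lt m m2" using h m ne by auto
    have "lex_less lt m m" using lex_less_trans[OF PO _ _ _ 2 1] V m h by blast
    then show False by (simp add: lex_less_irrefl)
  qed
qed

lemma lead_mon_prop:
  assumes PO: "P_order P lt" and f0: "f \<noteq> 0"
    and V: "\<forall>m\<in>Poly_Mapping.keys f. Poly_Mapping.keys m \<subseteq> vertices P"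
  shows "lead_mon lt f \<in> Poly_Mapping.keys f"
    "\<forall>m'\<in>Poly_Mapping.keys f. m' \<noteq> lead_mon lt f \<longrightarrow> lex_less lt m' (lead_mon lt f)"
proof -
  obtain m where m: "m \<in> Poly_Mapping.keys f" "\<forall>m'\<in>Poly_Mapping.keys f. m' \<noteq> m \<longrightarrow> lex_less lt m' m"
    using exists_max_mon[OF PO finite_keys _ V] f0 by auto
  have "lead_mon lt f = m" using lead_mon_eq[OF PO m V] .
  then show "lead_mon lt f \<in> Poly_Mapping.keys f"
    "\<forall>m'\<in>Poly_Mapping.keys f. m' \<noteq> lead_mon lt f \<longrightarrow> lex_less lt m' (lead_mon lt f)"
    using m by auto
qed

lemma keys_mult_single:
  "Poly_Mapping.keys (q * Poly_Mapping.single A c) \<subseteq> {y + A |y. y \<in> Poly_Mapping.keys q}"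
proof
  fix x assume "x \<in> Poly_Mapping.keys (q * Poly_Mapping.single A c)"
  then obtain a b where "x = a + b" "a \<in> Poly_Mapping.keys q" "b \<in> Poly_Mapping.keys (Poly_Mapping.single A c)"
    using keys_mult by blast
  then show "x \<in> {y + A |y. y \<in> Poly_Mapping.keys q}" by (auto split: if_splits)
qed

lemma divides_lead:
  fixes q :: "'k::field pol"
  assumes PO: "P_order P lt" and qS: "in_S P q"
    and AV: "Poly_Mapping.keys A \<subseteq> vertices P" and BV: "Poly_Mapping.keys B \<subseteq> vertices P"
    and BA: "lex_less lt B A" and ca: "ca \<noteq> 0"
    and u: "u \<in> Poly_Mapping.keys (q * (Poly_Mapping.single A ca + Poly_Mapping.single B cb))"
    and le: "lex_le lt (lead_mon lt (q * (Poly_Mapping.single A ca + Poly_Mapping.single B cb))) u"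
  shows "\<exists>w. u = w + A"
proof -
  define g where "g = Poly_Mapping.single A ca + Poly_Mapping.single B cb"
  have qg: "q * g = q * Poly_Mapping.single A ca + q * Poly_Mapping.single B cb"
    by (simp add: g_def distrib_left)
  have qV: "\<forall>m\<in>Poly_Mapping.keys q. Poly_Mapping.keys m \<subseteq> vertices P" using qS by (simp add: in_S_def)
  have q0: "q \<noteq> 0" using u by (auto simp: g_def)
  obtain M where M: "M \<in> Poly_Mapping.keys q" "\<forall>m'\<in>Poly_Mapping.keys q. m' \<noteq> M \<longrightarrow> lex_less lt m' M"
    using exists_max_mon[OF PO finite_keys _ qV] q0 by auto
  have kA: "Poly_Mapping.keys (q * Poly_Mapping.single A ca) \<subseteq> {y + A |y. y \<in> Poly_Mapping.keys q}"
    by (rule keys_mult_single)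
  have kB: "Poly_Mapping.keys (q * Poly_Mapping.single B cb) \<subseteq> {y + B |y. y \<in> Poly_Mapping.keys q}"
    by (rule keys_mult_single)
  have kqg: "Poly_Mapping.keys (q * g) \<subseteq> {y + A |y. y \<in> Poly_Mapping.keys q} \<union> {y + B |y. y \<in> Poly_Mapping.keys q}"
    using qg keys_add[of "q * Poly_Mapping.single A ca" "q * Poly_Mapping.single B cb"] kA kB by auto
  have addV: "Poly_Mapping.keys (y + C) \<subseteq> vertices P" if "y \<in> Poly_Mapping.keys q" "Poly_Mapping.keys C \<subseteq> vertices P" for y C
    using keys_add[of y C] qV that by blast
  have qgV: "\<forall>m\<in>Poly_Mapping.keys (q * g). Poly_Mapping.keys m \<subseteq> vertices P"
    using kqg addV AV BV by blast
  have yle: "lex_less lt (y + B) (M + A)" if y: "y \<in> Poly_Mapping.keys q" for y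
  proof -
    have 1: "lex_less lt (y + B) (y + A)" using lex_less_add_left[OF BA] .
    show "lex_less lt (y + B) (M + A)"
    proof (cases "y = M")
      case True then show ?thesis using 1 by simp
    next
      case False
      then have "lex_less lt (y + A) (M + A)" using M(2) y lex_less_add by blast
      then show ?thesis using lex_less_trans[OF PO addV[OF y BV] addV[OF y AV] addV[OF M(1) AV] 1] by blast
    qed
  qed
  define q' where "q' = q - Poly_Mapping.single M (Poly_Mapping.lookup q M)"
  have qdec: "q = Poly_Mapping.single M (Poly_Mapping.lookup q M) + q'" by (simp add: q'_def)
  have kq': "Poly_Mapping.keys q' \<subseteq> Poly_Mapping.keys q - {M}"
    by (auto simp: q'_def in_keys_iff lookup_minus lookup_single when_def split: if_splits)
  have "q * Poly_Mapping.single A ca = (Poly_Mapping.single M (Poly_Mapping.lookup q M) + q') * Poly_Mapping.single A ca"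
    using qdec by metis
  then have e: "q * Poly_Mapping.single A ca = Poly_Mapping.single (M + A) (Poly_Mapping.lookup q M * ca) + q' * Poly_Mapping.single A ca"
    by (simp add: distrib_right mult_single)
  have n1: "Poly_Mapping.lookup (q' * Poly_Mapping.single A ca) (M + A) = 0"
  proof -
    have "M + A \<notin> Poly_Mapping.keys (q' * Poly_Mapping.single A ca)"
    proof
      assume "M + A \<in> Poly_Mapping.keys (q' * Poly_Mapping.single A ca)"
      then obtain y where "M + A = y + A" "y \<in> Poly_Mapping.keys q'" using keys_mult_single by blast
      then show False using kq' by auto
    qed
    then show ?thesis by (simp add: in_keys_iff)
  qed
  have n2: "Poly_Mapping.lookup (q * Poly_Mapping.single B cb) (M + A) = 0"
  proof -
    have "M + A \<notin> Poly_Mapping.keys (q * Poly_Mapping.single B cb)"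
    proof
      assume "M + A \<in> Poly_Mapping.keys (q * Poly_Mapping.single B cb)"
      then obtain y where "M + A = y + B" "y \<in> Poly_Mapping.keys q" using keys_mult_single by blast
      then show False using yle lex_less_irrefl by metis
    qed
    then show ?thesis by (simp add: in_keys_iff)
  qed
  have "Poly_Mapping.lookup (q * g) (M + A) = Poly_Mapping.lookup q M * ca"
    using n1 n2 by (simp add: qg e lookup_add)
  then have MA: "M + A \<in> Poly_Mapping.keys (q * g)" using M(1) ca by (simp add: in_keys_iff)
  have qg0: "q * g \<noteq> 0" using MA by auto
  have Lk: "lead_mon lt (q * g) \<in> Poly_Mapping.keys (q * g)" using lead_mon_prop(1)[OF PO qg0 qgV] .
  have L: "lex_le lt (M + A) (lead_mon lt (q * g))"
    using lead_mon_prop(2)[OF PO qg0 qgV] MA unfolding lex_le_def by blast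
  have uu: "lex_le lt (M + A) u"
    using lex_le_trans[OF PO _ _ _ L le[folded g_def]] qgV MA Lk u[folded g_def] by blast
  from u kqg obtain y where y: "y \<in> Poly_Mapping.keys q" "u = y + A \<or> u = y + B" unfolding g_def by blast
  show ?thesis
  proof (cases "u = y + A")
    case True then show ?thesis by blast
  next
    case False
    then have ub: "u = y + B" using y by blast
    have "lex_less lt (y + B) (y + B)"
      using lex_less_le_trans[OF PO addV[OF y(1) BV] addV[OF M(1) AV] addV[OF y(1) BV] yle[OF y(1)]] uu ub by blast
    then show ?thesis by (simp add: lex_less_irrefl)
  qed
qed


lemma box_vert:
  assumes inn: "inner_interval P (i, j) (k, l)" and "i \<le> x" "x \<le> k" "j \<le> y" "y \<le> l"
  shows "(x, y) \<in> vertices P"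
proof -
  have ik: "i < k" "j < l" using inn by (auto simp: inner_interval_def)
  define v where "v = (min x (k - 1), min y (l - 1))"
  have H: "\<And>v. i \<le> fst v \<Longrightarrow> fst v + 1 \<le> k \<Longrightarrow> j \<le> snd v \<Longrightarrow> snd v + 1 \<le> l \<Longrightarrow> v \<in> P"
    using inn unfolding inner_interval_def by auto
  have vP: "v \<in> P" by (rule H) (use assms(2-5) ik in \<open>auto simp: v_def\<close>)
  have e1: "x - fst v \<in> {0, 1}" using assms(2-5) ik unfolding v_def by auto
  have e2: "y - snd v \<in> {0, 1}" using assms(2-5) ik unfolding v_def by auto
  have "(x, y) = (fst v + (x - fst v), snd v + (y - snd v))" by simp
  then show ?thesis unfolding vertices_def using vP e1 e2 by blast
qed

lemma sub_inner:
  assumes inn: "inner_interval P (i, j) (k, l)" and "i \<le> x1" "x1 < x2" "x2 \<le> k" "j \<le> y1" "y1 < y2" "y2 \<le> l"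
  shows "inner_interval P (x1, y1) (x2, y2)"
  using assms unfolding inner_interval_def by auto

lemma keys_binom:
  assumes "A \<noteq> B"
  shows "Poly_Mapping.keys (Poly_Mapping.single A (1::'k::field) - Poly_Mapping.single B 1) = {A, B}"
  using assms by (auto simp: in_keys_iff lookup_minus lookup_single when_def split: if_splits)

lemma mvar2_ne: "x \<noteq> s \<Longrightarrow> x \<noteq> t \<Longrightarrow> mvar x + mvar y \<noteq> mvar s + mvar t"
proof
  assume "x \<noteq> s" "x \<noteq> t" "mvar x + mvar y = mvar s + mvar t"
  then have "Poly_Mapping.lookup (mvar x + mvar y) x = Poly_Mapping.lookup (mvar s + mvar t) x" by simp
  then show False using \<open>x \<noteq> s\<close> \<open>x \<noteq> t\<close> by (simp add: lookup_add lookup_mvar)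
qed

lemma mvar3_ne: "x \<noteq> p \<Longrightarrow> x \<noteq> q \<Longrightarrow> x \<noteq> s \<Longrightarrow> mvar x + mvar y + mvar z \<noteq> mvar p + mvar q + mvar s"
proof
  assume "x \<noteq> p" "x \<noteq> q" "x \<noteq> s" "mvar x + mvar y + mvar z = mvar p + mvar q + mvar s"
  then have "Poly_Mapping.lookup (mvar x + mvar y + mvar z) x = Poly_Mapping.lookup (mvar p + mvar q + mvar s) x" by simp
  then show False using \<open>x \<noteq> p\<close> \<open>x \<noteq> q\<close> \<open>x \<noteq> s\<close> by (simp add: lookup_add lookup_mvar)
qed

lemma mem3:
  assumes "mvar p1 + mvar p2 + mvar p3 = w + (mvar x + mvar y)"
  shows "x \<in> {p1, p2, p3}" "y \<in> {p1, p2, p3}"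
proof -
  have "Poly_Mapping.lookup (mvar p1 + mvar p2 + mvar p3) x = Poly_Mapping.lookup (w + (mvar x + mvar y)) x"
    using assms by simp
  then show "x \<in> {p1, p2, p3}" by (auto simp: lookup_add lookup_mvar split: if_splits)
  have "Poly_Mapping.lookup (mvar p1 + mvar p2 + mvar p3) y = Poly_Mapping.lookup (w + (mvar x + mvar y)) y"
    using assms by simp
  then show "y \<in> {p1, p2, p3}" by (auto simp: lookup_add lookup_mvar split: if_splits)
qed

lemma fmin_keys:
  assumes "x1 < x2" "y1 < y2"
  shows "Poly_Mapping.keys (fmin (x1, y1) (x2, y2) :: 'k::field pol) =
    {mvar (x1, y1) + mvar (x2, y2), mvar (x1, y2) + mvar (x2, y1)}"
proof -
  have "mvar (x1, y1) + mvar (x2, y2) \<noteq> mvar (x1, y2) + mvar (x2, y1)"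
    using assms by (intro mvar2_ne) auto
  then show ?thesis by (simp add: fmin_eq keys_binom)
qed

lemma in_S_mult:
  assumes "in_S P q" "in_S P g"
  shows "in_S P (q * g)"
  unfolding in_S_def
proof
  fix mo assume "mo \<in> Poly_Mapping.keys (q * g)"
  then obtain a b where "mo = a + b" "a \<in> Poly_Mapping.keys q" "b \<in> Poly_Mapping.keys g"
    using keys_mult by blast
  then show "Poly_Mapping.keys mo \<subseteq> vertices P"
    using assms keys_add[of a b] unfolding in_S_def by blast
qed

lemma in_S_single: "x \<in> vertices P \<Longrightarrow> in_S P (Poly_Mapping.single (mvar x) c)"
  by (simp add: in_S_def)

lemma in_S_fmin:
  assumes "inner_interval P (x1, y1) (x2, y2)"
  shows "in_S P (fmin (x1, y1) (x2, y2) :: 'k::field pol)"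
proof -
  have lt: "x1 < x2" "y1 < y2" using assms by (auto simp: inner_interval_def)
  have V: "(x1, y1) \<in> vertices P" "(x2, y2) \<in> vertices P" "(x1, y2) \<in> vertices P" "(x2, y1) \<in> vertices P"
    using lt by (auto intro!: box_vert[OF assms])
  show ?thesis unfolding in_S_def fmin_keys[OF lt]
    using V keys_add[of "mvar (x1, y1)" "mvar (x2, y2)"] keys_add[of "mvar (x1, y2)" "mvar (x2, y1)"] by auto
qed

lemma in_S_keys: "in_S P f \<Longrightarrow> \<forall>m\<in>Poly_Mapping.keys f. Poly_Mapping.keys m \<subseteq> vertices P"
  by (simp add: in_S_def)

lemma keys_cond:
  assumes "lex_le lt (Y + X) L" "lex_le lt (Z + X) L"
  shows "\<forall>m\<in>Poly_Mapping.keys (Poly_Mapping.single X c * (Poly_Mapping.single Y 1 - Poly_Mapping.single Z (1::'k::comm_ring_1))). lex_le lt m L"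
proof -
  have e: "Poly_Mapping.single X c * (Poly_Mapping.single Y 1 - Poly_Mapping.single Z (1::'k)) =
      Poly_Mapping.single (Y + X) c - Poly_Mapping.single (Z + X) c"
    by (simp add: right_diff_distrib mult_single add.commute)
  show ?thesis unfolding e using keys_diff[of "Poly_Mapping.single (Y + X) c" "Poly_Mapping.single (Z + X) c"] assms
    by (auto split: if_splits)
qed

lemma lex2_wit:
  assumes PO: "P_order P lt" and V: "p \<in> vertices P" "q \<in> vertices P" "s \<in> vertices P" "t \<in> vertices P"
    and D: "distinct [p, q, s, t]" and ps: "lt p s" and qs: "lt q s" and st: "\<not> lt s t"
  shows "lex_less lt (mvar p + mvar q) (mvar s + mvar t)"
  unfolding lex_less_def
proof (intro exI conjI allI impI)
  show "Poly_Mapping.lookup (mvar p + mvar q) s < Poly_Mapping.lookup (mvar s + mvar t) s"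
    using D by (auto simp: lookup_add lookup_mvar)
  fix w assume sw: "lt s w"
  have "w \<noteq> p" using PO_trans[OF PO V(1) V(3) V(1) ps] sw PO_irrefl[OF PO V(1)] by auto
  moreover have "w \<noteq> q" using PO_trans[OF PO V(2) V(3) V(2) qs] sw PO_irrefl[OF PO V(2)] by auto
  moreover have "w \<noteq> s" using sw PO_irrefl[OF PO V(3)] by auto
  moreover have "w \<noteq> t" using sw st by auto
  ultimately show "Poly_Mapping.lookup (mvar p + mvar q) w = Poly_Mapping.lookup (mvar s + mvar t) w"
    by (auto simp: lookup_add lookup_mvar)
qed

lemma lex2:
  assumes PO: "P_order P lt" and V: "p \<in> vertices P" "q \<in> vertices P" "s \<in> vertices P" "t \<in> vertices P"
    and D: "distinct [p, q, s, t]"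
  shows "lex_less lt (mvar p + mvar q) (mvar s + mvar t) \<longleftrightarrow> (lt p s \<and> lt q s) \<or> (lt p t \<and> lt q t)"
proof
  assume "lex_less lt (mvar p + mvar q) (mvar s + mvar t)"
  then obtain v where v: "Poly_Mapping.lookup (mvar p + mvar q) v < Poly_Mapping.lookup (mvar s + mvar t) v"
    "\<forall>w. lt v w \<longrightarrow> Poly_Mapping.lookup (mvar p + mvar q) w = Poly_Mapping.lookup (mvar s + mvar t) w"
    unfolding lex_less_def by blast
  have vst: "v = s \<or> v = t" and vp: "v \<noteq> p" and vq: "v \<noteq> q"
    using v(1) D by (auto simp: lookup_add lookup_mvar split: if_splits)
  have vV: "v \<in> vertices P" using vst V by auto
  have "\<not> lt v p"
  proof
    assume "lt v p"
    then have "Poly_Mapping.lookup (mvar p + mvar q) p = Poly_Mapping.lookup (mvar s + mvar t) p" using v(2) by blast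
    then show False using D by (auto simp: lookup_add lookup_mvar split: if_splits)
  qed
  then have "lt p v" using PO_total[OF PO V(1) vV] vp by auto
  have "\<not> lt v q"
  proof
    assume "lt v q"
    then have "Poly_Mapping.lookup (mvar p + mvar q) q = Poly_Mapping.lookup (mvar s + mvar t) q" using v(2) by blast
    then show False using D by (auto simp: lookup_add lookup_mvar split: if_splits)
  qed
  then have "lt q v" using PO_total[OF PO V(2) vV] vq by auto
  show "(lt p s \<and> lt q s) \<or> (lt p t \<and> lt q t)" using vst \<open>lt p v\<close> \<open>lt q v\<close> by auto
next
  assume H: "(lt p s \<and> lt q s) \<or> (lt p t \<and> lt q t)"
  have st_asym: "\<not> (lt s t \<and> lt t s)" using PO_trans[OF PO V(3) V(4) V(3)] PO_irrefl[OF PO V(3)] by blast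
  have D': "distinct [p, q, t, s]" using D by auto
  have tcase: "lex_less lt (mvar p + mvar q) (mvar s + mvar t)" if "lt p t" "lt q t" "\<not> lt t s"
  proof -
    have "lex_less lt (mvar p + mvar q) (mvar t + mvar s)" using lex2_wit[OF PO V(1,2,4,3) D'] that by blast
    then show ?thesis by (simp add: add.commute)
  qed
  show "lex_less lt (mvar p + mvar q) (mvar s + mvar t)"
  proof (cases "lt s t")
    case True
    then have "\<not> lt t s" using st_asym by blast
    have "lt p t" "lt q t" using H True PO_trans[OF PO V(1) V(3) V(4)] PO_trans[OF PO V(2) V(3) V(4)] by blast+
    then show ?thesis using tcase \<open>\<not> lt t s\<close> by blast
  next
    case False
    show ?thesis
    proof (cases "lt p s \<and> lt q s")
      case True then show ?thesis using lex2_wit[OF PO V D] False by blast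
    next
      case False2: False
      then have pt: "lt p t" "lt q t" using H by blast+
      have "\<not> lt t s"
      proof
        assume "lt t s"
        then have "lt p s" "lt q s" using pt PO_trans[OF PO V(1) V(4) V(3)] PO_trans[OF PO V(2) V(4) V(3)] by blast+
        then show False using False2 by blast
      qed
      then show ?thesis using tcase pt by blast
    qed
  qed
qed

lemma rtz_two:
  fixes f g1 g2 q1 q2 :: "'k::field pol"
  assumes PO: "P_order P lt" and G: "g1 \<in> G" "g2 \<in> G" "g1 \<noteq> g2"
    and S: "in_S P q1" "in_S P q2" "in_S P (q1 * g1)" "in_S P (q2 * g2)"
    and f: "f = q1 * g1 + q2 * g2"
    and c1: "\<forall>m\<in>Poly_Mapping.keys (q1 * g1). lex_le lt m (lead_mon lt f)"
    and c2: "\<forall>m\<in>Poly_Mapping.keys (q2 * g2). lex_le lt m (lead_mon lt f)"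
  shows "reduces_to_zero P lt G f"
  unfolding reduces_to_zero_def
proof (intro exI conjI)
  let ?q = "\<lambda>g. if g = g1 then q1 else q2"
  show "finite {g1, g2}" by simp
  show "{g1, g2} \<subseteq> G" using G by simp
  show "\<forall>g\<in>{g1, g2}. in_S P (?q g)" using S G by auto
  show "f = (\<Sum>g\<in>{g1, g2}. ?q g * g)" using f G by simp
  show "\<forall>g\<in>{g1, g2}. ?q g * g \<noteq> 0 \<longrightarrow> lex_le lt (lead_mon lt (?q g * g)) (lead_mon lt f)"
  proof (intro ballI impI)
    fix g assume g: "g \<in> {g1, g2}" and nz: "?q g * g \<noteq> 0"
    have sS: "in_S P (?q g * g)" using g S G by auto
    have "lead_mon lt (?q g * g) \<in> Poly_Mapping.keys (?q g * g)"
      using lead_mon_prop(1)[OF PO nz in_S_keys[OF sS]] .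
    then show "lex_le lt (lead_mon lt (?q g * g)) (lead_mon lt f)" using g c1 c2 G by (auto split: if_splits)
  qed
qed

lemma rtz_lead:
  fixes S :: "'k::field pol"
  assumes "S = (\<Sum>g\<in>H. q g * g)" and u: "u \<in> Poly_Mapping.keys S"
  shows "\<exists>g\<in>H. u \<in> Poly_Mapping.keys (q g * g)"
proof -
  have "Poly_Mapping.lookup S u = (\<Sum>g\<in>H. Poly_Mapping.lookup (q g * g) u)"
    using assms(1) by (simp add: lookup_sum)
  moreover have "Poly_Mapping.lookup S u \<noteq> 0" using u by (simp add: in_keys_iff)
  ultimately obtain g where "g \<in> H" "Poly_Mapping.lookup (q g * g) u \<noteq> 0"
    by (metis (mono_tags, lifting) sum.not_neutral_contains_not_neutral)
  then show ?thesis by (auto simp: in_keys_iff)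
qed

lemma lead_div:
  fixes q :: "'k::field pol"
  assumes PO: "P_order P lt" and inn: "inner_interval P (x1, y1) (x2, y2)" and qS: "in_S P q"
    and u: "u \<in> Poly_Mapping.keys (q * fmin (x1, y1) (x2, y2))"
    and le: "lex_le lt (lead_mon lt (q * fmin (x1, y1) (x2, y2))) u"
  shows "\<exists>w. (lead_mon lt (fmin (x1, y1) (x2, y2) :: 'k pol) = mvar (x1, y1) + mvar (x2, y2) \<and>
              lex_less lt (mvar (x1, y2) + mvar (x2, y1)) (mvar (x1, y1) + mvar (x2, y2)) \<and>
              u = w + (mvar (x1, y1) + mvar (x2, y2))) \<or>
             (lead_mon lt (fmin (x1, y1) (x2, y2) :: 'k pol) = mvar (x1, y2) + mvar (x2, y1) \<and>
              lex_less lt (mvar (x1, y1) + mvar (x2, y2)) (mvar (x1, y2) + mvar (x2, y1)) \<and>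
              u = w + (mvar (x1, y2) + mvar (x2, y1)))"
proof -
  let ?D = "mvar (x1, y1) + mvar (x2, y2)" and ?C = "mvar (x1, y2) + mvar (x2, y1)"
  let ?g = "fmin (x1, y1) (x2, y2) :: 'k pol"
  have lt: "x1 < x2" "y1 < y2" using inn by (auto simp: inner_interval_def)
  have K: "Poly_Mapping.keys ?g = {?D, ?C}" using fmin_keys[OF lt] .
  have DC: "?D \<noteq> ?C" using lt by (intro mvar2_ne) auto
  have gS: "in_S P ?g" using in_S_fmin[OF inn] .
  have g0: "?g \<noteq> 0" using K by auto
  have DV: "Poly_Mapping.keys ?D \<subseteq> vertices P" and CV: "Poly_Mapping.keys ?C \<subseteq> vertices P"
    using gS K unfolding in_S_def by auto
  have L: "lead_mon lt ?g \<in> {?D, ?C}" using lead_mon_prop(1)[OF PO g0 in_S_keys[OF gS]] K by simp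
  have Lm: "\<forall>m'\<in>{?D, ?C}. m' \<noteq> lead_mon lt ?g \<longrightarrow> lex_less lt m' (lead_mon lt ?g)"
    using lead_mon_prop(2)[OF PO g0 in_S_keys[OF gS]] K by simp
  have geq: "?g = Poly_Mapping.single ?D 1 + Poly_Mapping.single ?C (-1)"
    by (simp add: fmin_eq single_uminus)
  have geq2: "?g = Poly_Mapping.single ?C (-1) + Poly_Mapping.single ?D 1"
    by (simp add: fmin_eq single_uminus)
  show ?thesis
  proof (cases "lead_mon lt ?g = ?D")
    case True
    then have CD: "lex_less lt ?C ?D" using Lm DC by auto
    have "\<exists>w. u = w + ?D"
      using divides_lead[OF PO qS DV CV CD, of 1 u "-1"] u le unfolding geq by simp
    then show ?thesis using True CD by blast
  next
    case False
    then have LC: "lead_mon lt ?g = ?C" using L by auto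
    then have CD: "lex_less lt ?D ?C" using Lm DC by auto
    have "\<exists>w. u = w + ?C"
      using divides_lead[OF PO qS CV DV CD, of "-1" u 1] u le unfolding geq2 by simp
    then show ?thesis using LC CD by blast
  qed
qed


lemma E1_eq: "(Poly_Mapping.single (mvar (k,j) + mvar (i,n) + mvar (m,l)) 1 - Poly_Mapping.single (mvar (m,n) + mvar (i,j) + mvar (k,l)) 1 :: 'k::field pol)
   = Poly_Mapping.single (mvar (k,l)) (-1) * fmin (i,j) (m,n) + Poly_Mapping.single (mvar (i,n)) (-1) * fmin (m,j) (k,l)"
  by (simp add: fmin_eq algebra_simps mult_single single_uminus)

lemma E2_eq: "(Poly_Mapping.single (mvar (k,j) + mvar (i,n) + mvar (m,l)) 1 - Poly_Mapping.single (mvar (m,n) + mvar (i,j) + mvar (k,l)) 1 :: 'k::field pol)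
   = Poly_Mapping.single (mvar (i,j)) (-1) * fmin (m,n) (k,l) + Poly_Mapping.single (mvar (m,l)) (-1) * fmin (i,j) (k,n)"
  by (simp add: fmin_eq algebra_simps mult_single single_uminus)

lemma SP_eq: "Poly_Mapping.single (mvar (m,n)) (-1) * fmin (i,j) (k,l) - Poly_Mapping.single (mvar (k,j)) (-1) * fmin (i,n) (m,l) =
   (Poly_Mapping.single (mvar (k,j) + mvar (i,n) + mvar (m,l)) 1 - Poly_Mapping.single (mvar (m,n) + mvar (i,j) + mvar (k,l)) 1 :: 'k::field pol)"
  by (simp add: fmin_eq algebra_simps mult_single single_uminus)

lemma keys3_sub: "Poly_Mapping.keys (mvar x + mvar y + mvar z) \<subseteq> {x, y, z}"
  using keys_add[of "mvar x + mvar y" "mvar z"] keys_add[of "mvar x" "mvar y"] by auto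

theorem mainTheorem5:
  fixes P :: "vert set" and lt :: "vert \<Rightarrow> vert \<Rightarrow> bool"
    and i j k l m n :: int
  assumes "collection_of_cells P"
    and "i < m" "m < k" "j < n" "n < l"
    and "inner_interval P (i, j) (k, l)"
    and "P_order P lt"
    and "\<not> coprime_mon (lead_mon lt (fmin (i, j) (k, l) :: ('k::field) pol))
                        (lead_mon lt (fmin (i, n) (m, l) :: 'k pol))"
  shows "reduces_to_zero P lt (inner_minors P)
           (spoly lt (fmin (i, j) (k, l)) (fmin (i, n) (m, l)) :: 'k pol)
    \<longleftrightarrow>
     (let a = (i, j); b = (k, l); \<delta> = (m, n); \<alpha> = (i, n); \<beta> = (m, l);
          d = (k, j); h = (m, j); r = (k, n);
          M1 = mvar d + mvar \<alpha> + mvar \<beta>; M2 = mvar \<delta> + mvar a + mvar b in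
      (lex_less lt M1 M2 \<and> ((lt h a \<and> lt \<alpha> a) \<or> (lt h \<delta> \<and> lt \<alpha> \<delta>))) \<or>
      (lex_less lt M1 M2 \<and> ((lt r \<delta> \<and> lt \<beta> \<delta>) \<or> (lt r b \<and> lt \<beta> b))) \<or>
      (lex_less lt M2 M1 \<and> ((lt r \<alpha> \<and> lt a \<alpha>) \<or> (lt r d \<and> lt a d))) \<or>
      (lex_less lt M2 M1 \<and> ((lt h d \<and> lt b d) \<or> (lt h \<beta> \<and> lt b \<beta>))))"
  proof -
  note PO = assms(7) and inn = assms(6)
  have ne: "i \<noteq> m" "m \<noteq> i" "m \<noteq> k" "k \<noteq> m" "i \<noteq> k" "k \<noteq> i" "j \<noteq> n" "n \<noteq> j"
    "n \<noteq> l" "l \<noteq> n" "j \<noteq> l" "l \<noteq> j"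
    using assms(2-5) by auto
  have ik: "i < k" "j < l" using assms(2-5) by auto
  have V: "(i,j) \<in> vertices P" "(k,l) \<in> vertices P" "(i,l) \<in> vertices P" "(k,j) \<in> vertices P"
    "(i,n) \<in> vertices P" "(m,l) \<in> vertices P" "(m,n) \<in> vertices P" "(m,j) \<in> vertices P" "(k,n) \<in> vertices P"
    using assms(2-5) by (auto intro!: box_vert[OF inn])
  define fab :: "'k pol" where "fab = fmin (i,j) (k,l)"
  define fal :: "'k pol" where "fal = fmin (i,n) (m,l)"
  have Kab: "Poly_Mapping.keys fab = {mvar (i,j) + mvar (k,l), mvar (i,l) + mvar (k,j)}"
    unfolding fab_def using fmin_keys[OF ik] .
  have Kal: "Poly_Mapping.keys fal = {mvar (i,n) + mvar (m,l), mvar (i,l) + mvar (m,n)}"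
    unfolding fal_def using fmin_keys[of i m n l] assms(2-5) by simp
  have innal: "inner_interval P (i,n) (m,l)" using sub_inner[OF inn] assms(2-5) by simp
  have abS: "in_S P fab" unfolding fab_def using in_S_fmin[OF inn] .
  have alS: "in_S P fal" unfolding fal_def using in_S_fmin[OF innal] .
  have fab0: "fab \<noteq> 0" using Kab by auto
  have fal0: "fal \<noteq> 0" using Kal by auto
  have Lab_in: "lead_mon lt fab \<in> Poly_Mapping.keys fab" using lead_mon_prop(1)[OF PO fab0 in_S_keys[OF abS]] .
  have Lal_in: "lead_mon lt fal \<in> Poly_Mapping.keys fal" using lead_mon_prop(1)[OF PO fal0 in_S_keys[OF alS]] .
  have ncop: "\<not> coprime_mon (lead_mon lt fab) (lead_mon lt fal)" using assms(8) unfolding fab_def fal_def .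
  have c1: "coprime_mon (mvar (i,j) + mvar (k,l)) Y" if "Y \<in> Poly_Mapping.keys fal" for Y
    using that ne unfolding Kal by (auto simp: coprime_mon_def lookup_add lookup_mvar)
  have c2: "coprime_mon X (mvar (i,n) + mvar (m,l))" if "X \<in> Poly_Mapping.keys fab" for X
    using that ne unfolding Kab by (auto simp: coprime_mon_def lookup_add lookup_mvar)
  have Lab: "lead_mon lt fab = mvar (i,l) + mvar (k,j)" using Lab_in Kab c1[OF Lal_in] ncop by auto
  have Lal: "lead_mon lt fal = mvar (i,l) + mvar (m,n)" using Lal_in Kal c2[OF Lab_in] ncop by auto
  have ab_ne: "mvar (i,j) + mvar (k,l) \<noteq> mvar (i,l) + mvar (k,j)" using ne by (intro mvar2_ne) auto
  have al_ne: "mvar (i,n) + mvar (m,l) \<noteq> mvar (i,l) + mvar (m,n)" using ne by (intro mvar2_ne) auto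
  have lc1: "lead_coeff lt fab = -1"
    unfolding lead_coeff_def Lab using ab_ne by (simp add: fab_def fmin_eq lookup_minus lookup_single when_def)
  have lc2: "lead_coeff lt fal = -1"
    unfolding lead_coeff_def Lal using al_ne by (simp add: fal_def fmin_eq lookup_minus lookup_single when_def)
  have lcm: "mon_lcm (mvar (i,l) + mvar (k,j)) (mvar (i,l) + mvar (m,n)) = mvar (i,l) + mvar (k,j) + mvar (m,n)"
  proof -
    have "(\<lambda>v. max (Poly_Mapping.lookup (mvar (i,l) + mvar (k,j)) v) (Poly_Mapping.lookup (mvar (i,l) + mvar (m,n)) v))
        = Poly_Mapping.lookup (mvar (i,l) + mvar (k,j) + mvar (m,n))"
      using ne by (auto simp: lookup_add lookup_mvar fun_eq_iff)
    then show ?thesis unfolding mon_lcm_def by (simp add: lookup_inverse)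
  qed
  have d1: "mvar (i,l) + mvar (k,j) + mvar (m,n) - (mvar (i,l) + mvar (k,j)) = mvar (m,n)" by simp
  have "mvar (i,l) + mvar (k,j) + mvar (m,n) = (mvar (i,l) + mvar (m,n)) + mvar (k,j)" by (simp add: add_ac)
  then have d2: "mvar (i,l) + mvar (k,j) + mvar (m,n) - (mvar (i,l) + mvar (m,n)) = mvar (k,j)" by simp
  define M1 where "M1 = mvar (k,j) + mvar (i,n) + mvar (m,l)"
  define M2 where "M2 = mvar (m,n) + mvar (i,j) + mvar (k,l)"
  define S :: "'k pol" where "S = Poly_Mapping.single M1 1 - Poly_Mapping.single M2 1"
  have SP: "spoly lt (fmin (i, j) (k, l)) (fmin (i, n) (m, l)) = S"
    unfolding spoly_def Let_def fab_def[symmetric] fal_def[symmetric] Lab Lal lcm d1 d2 lc1 lc2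
    by (simp add: S_def M1_def M2_def fab_def fal_def SP_eq)
  have M12: "M1 \<noteq> M2" unfolding M1_def M2_def using ne by (intro mvar3_ne) auto
  have KS: "Poly_Mapping.keys S = {M1, M2}" unfolding S_def using keys_binom[OF M12] .
  have M1V: "Poly_Mapping.keys M1 \<subseteq> vertices P" unfolding M1_def using keys3_sub V by blast
  have M2V: "Poly_Mapping.keys M2 \<subseteq> vertices P" unfolding M2_def using keys3_sub V by blast
  have SV: "\<forall>m\<in>Poly_Mapping.keys S. Poly_Mapping.keys m \<subseteq> vertices P" using KS M1V M2V by auto
  have tot: "lex_less lt M1 M2 \<or> lex_less lt M2 M1" using lex_total[OF PO M1V M2V M12] .
  have asym: "\<not> (lex_less lt M1 M2 \<and> lex_less lt M2 M1)"
    using lex_less_trans[OF PO M1V M2V M1V] lex_less_irrefl by blast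
  have LS1: "lead_mon lt S = M2" if "lex_less lt M1 M2"
    using lead_mon_eq[OF PO _ _ SV] KS M12 that by auto
  have LS2: "lead_mon lt S = M1" if "lex_less lt M2 M1"
    using lead_mon_eq[OF PO _ _ SV] KS M12 that by auto
  have C1: "lex_less lt (mvar (m,j) + mvar (i,n)) (mvar (i,j) + mvar (m,n)) \<longleftrightarrow>
     (lt (m,j) (i,j) \<and> lt (i,n) (i,j)) \<or> (lt (m,j) (m,n) \<and> lt (i,n) (m,n))"
    by (rule lex2[OF PO]) (use V ne in auto)
  have C2: "lex_less lt (mvar (k,n) + mvar (m,l)) (mvar (m,n) + mvar (k,l)) \<longleftrightarrow>
     (lt (k,n) (m,n) \<and> lt (m,l) (m,n)) \<or> (lt (k,n) (k,l) \<and> lt (m,l) (k,l))"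
    by (rule lex2[OF PO]) (use V ne in auto)
  have C3: "lex_less lt (mvar (k,n) + mvar (i,j)) (mvar (i,n) + mvar (k,j)) \<longleftrightarrow>
     (lt (k,n) (i,n) \<and> lt (i,j) (i,n)) \<or> (lt (k,n) (k,j) \<and> lt (i,j) (k,j))"
    by (rule lex2[OF PO]) (use V ne in auto)
  have C4: "lex_less lt (mvar (m,j) + mvar (k,l)) (mvar (k,j) + mvar (m,l)) \<longleftrightarrow>
     (lt (m,j) (k,j) \<and> lt (k,l) (k,j)) \<or> (lt (m,j) (m,l) \<and> lt (k,l) (m,l))"
    by (rule lex2[OF PO]) (use V ne in auto)
  have main: "reduces_to_zero P lt (inner_minors P) S \<longleftrightarrow>
     (lex_less lt M1 M2 \<and> lex_less lt (mvar (m,j) + mvar (i,n)) (mvar (i,j) + mvar (m,n))) \<or>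
     (lex_less lt M1 M2 \<and> lex_less lt (mvar (k,n) + mvar (m,l)) (mvar (m,n) + mvar (k,l))) \<or>
     (lex_less lt M2 M1 \<and> lex_less lt (mvar (k,n) + mvar (i,j)) (mvar (i,n) + mvar (k,j))) \<or>
     (lex_less lt M2 M1 \<and> lex_less lt (mvar (m,j) + mvar (k,l)) (mvar (k,j) + mvar (m,l)))"
  proof
    assume R: "reduces_to_zero P lt (inner_minors P) S"
    then obtain H q where H: "finite H" "H \<subseteq> inner_minors P" "\<forall>g\<in>H. in_S P (q g)"
      "S = (\<Sum>g\<in>H. q g * g)"
      "\<forall>g\<in>H. q g * g \<noteq> 0 \<longrightarrow> lex_le lt (lead_mon lt (q g * g)) (lead_mon lt S)"
      unfolding reduces_to_zero_def by blast
    have step: "\<exists>x1 y1 x2 y2 w. x1 < x2 \<and> y1 < y2 \<and>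
       ((lead_mon lt (fmin (x1, y1) (x2, y2) :: 'k pol) = mvar (x1, y1) + mvar (x2, y2) \<and>
              lex_less lt (mvar (x1, y2) + mvar (x2, y1)) (mvar (x1, y1) + mvar (x2, y2)) \<and>
              u = w + (mvar (x1, y1) + mvar (x2, y2))) \<or>
             (lead_mon lt (fmin (x1, y1) (x2, y2) :: 'k pol) = mvar (x1, y2) + mvar (x2, y1) \<and>
              lex_less lt (mvar (x1, y1) + mvar (x2, y2)) (mvar (x1, y2) + mvar (x2, y1)) \<and>
              u = w + (mvar (x1, y2) + mvar (x2, y1))))"
      if u: "u = lead_mon lt S" "u \<in> Poly_Mapping.keys S" for u
    proof -
      obtain g where g: "g \<in> H" "u \<in> Poly_Mapping.keys (q g * g)" using rtz_lead[OF H(4) u(2)] by blast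
      have nz: "q g * g \<noteq> 0" using g(2) by auto
      have le: "lex_le lt (lead_mon lt (q g * g)) u" using H(5) g(1) nz u(1) by auto
      obtain a' b' where gab: "g = fmin a' b'" "inner_interval P a' b'"
        using H(2) g(1) unfolding inner_minors_def by blast
      obtain x1 y1 where a': "a' = (x1, y1)" by (cases a') auto
      obtain x2 y2 where b': "b' = (x2, y2)" by (cases b') auto
      have inn': "inner_interval P (x1, y1) (x2, y2)" using gab(2) a' b' by simp
      have lts: "x1 < x2" "y1 < y2" using inn' by (auto simp: inner_interval_def)
      have qS: "in_S P (q g)" using H(3) g(1) by blast
      show ?thesis using lead_div[OF PO inn' qS, of u] g(2) le lts unfolding gab(1) a' b' by blast
    qed
    from tot show "(lex_less lt M1 M2 \<and> lex_less lt (mvar (m,j) + mvar (i,n)) (mvar (i,j) + mvar (m,n))) \<or>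
     (lex_less lt M1 M2 \<and> lex_less lt (mvar (k,n) + mvar (m,l)) (mvar (m,n) + mvar (k,l))) \<or>
     (lex_less lt M2 M1 \<and> lex_less lt (mvar (k,n) + mvar (i,j)) (mvar (i,n) + mvar (k,j))) \<or>
     (lex_less lt M2 M1 \<and> lex_less lt (mvar (m,j) + mvar (k,l)) (mvar (k,j) + mvar (m,l)))"
    proof
      assume M: "lex_less lt M1 M2"
      have "M2 = lead_mon lt S" "M2 \<in> Poly_Mapping.keys S" using LS1[OF M] KS by auto
      from step[OF this] obtain x1 y1 x2 y2 w where lts: "x1 < x2" "y1 < y2" and
        cs: "(lead_mon lt (fmin (x1, y1) (x2, y2) :: 'k pol) = mvar (x1, y1) + mvar (x2, y2) \<and>
              lex_less lt (mvar (x1, y2) + mvar (x2, y1)) (mvar (x1, y1) + mvar (x2, y2)) \<and>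
              M2 = w + (mvar (x1, y1) + mvar (x2, y2))) \<or>
             (lead_mon lt (fmin (x1, y1) (x2, y2) :: 'k pol) = mvar (x1, y2) + mvar (x2, y1) \<and>
              lex_less lt (mvar (x1, y1) + mvar (x2, y2)) (mvar (x1, y2) + mvar (x2, y1)) \<and>
              M2 = w + (mvar (x1, y2) + mvar (x2, y1)))" by blast
      from cs show ?thesis
      proof
        assume A: "lead_mon lt (fmin (x1, y1) (x2, y2) :: 'k pol) = mvar (x1, y1) + mvar (x2, y2) \<and>
              lex_less lt (mvar (x1, y2) + mvar (x2, y1)) (mvar (x1, y1) + mvar (x2, y2)) \<and>
              M2 = w + (mvar (x1, y1) + mvar (x2, y2))"
        have mm: "(x1, y1) \<in> {(m,n), (i,j), (k,l)}" "(x2, y2) \<in> {(m,n), (i,j), (k,l)}"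
          using mem3[of "(m,n)" "(i,j)" "(k,l)" w "(x1,y1)" "(x2,y2)"] A unfolding M2_def by auto
        consider "x1 = i \<and> y1 = j \<and> x2 = m \<and> y2 = n" | "x1 = i \<and> y1 = j \<and> x2 = k \<and> y2 = l"
          | "x1 = m \<and> y1 = n \<and> x2 = k \<and> y2 = l"
          using mm lts assms(2-5) by auto
        then show ?thesis
        proof cases
          case 1 then show ?thesis using A M by (simp add: add.commute)
        next
          case 2 then show ?thesis using A Lab ab_ne unfolding fab_def by simp
        next
          case 3 then show ?thesis using A M by (simp add: add.commute)
        qed
      next
        assume A: "lead_mon lt (fmin (x1, y1) (x2, y2) :: 'k pol) = mvar (x1, y2) + mvar (x2, y1) \<and>
              lex_less lt (mvar (x1, y1) + mvar (x2, y2)) (mvar (x1, y2) + mvar (x2, y1)) \<and>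
              M2 = w + (mvar (x1, y2) + mvar (x2, y1))"
        have mm: "(x1, y2) \<in> {(m,n), (i,j), (k,l)}" "(x2, y1) \<in> {(m,n), (i,j), (k,l)}"
          using mem3[of "(m,n)" "(i,j)" "(k,l)" w "(x1,y2)" "(x2,y1)"] A unfolding M2_def by auto
        then have False using lts assms(2-5) by auto
        then show ?thesis ..
      qed
    next
      assume M: "lex_less lt M2 M1"
      have "M1 = lead_mon lt S" "M1 \<in> Poly_Mapping.keys S" using LS2[OF M] KS by auto
      from step[OF this] obtain x1 y1 x2 y2 w where lts: "x1 < x2" "y1 < y2" and
        cs: "(lead_mon lt (fmin (x1, y1) (x2, y2) :: 'k pol) = mvar (x1, y1) + mvar (x2, y2) \<and>
              lex_less lt (mvar (x1, y2) + mvar (x2, y1)) (mvar (x1, y1) + mvar (x2, y2)) \<and>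
              M1 = w + (mvar (x1, y1) + mvar (x2, y2))) \<or>
             (lead_mon lt (fmin (x1, y1) (x2, y2) :: 'k pol) = mvar (x1, y2) + mvar (x2, y1) \<and>
              lex_less lt (mvar (x1, y1) + mvar (x2, y2)) (mvar (x1, y2) + mvar (x2, y1)) \<and>
              M1 = w + (mvar (x1, y2) + mvar (x2, y1)))" by blast
      from cs show ?thesis
      proof
        assume A: "lead_mon lt (fmin (x1, y1) (x2, y2) :: 'k pol) = mvar (x1, y1) + mvar (x2, y2) \<and>
              lex_less lt (mvar (x1, y2) + mvar (x2, y1)) (mvar (x1, y1) + mvar (x2, y2)) \<and>
              M1 = w + (mvar (x1, y1) + mvar (x2, y2))"
        have mm: "(x1, y1) \<in> {(k,j), (i,n), (m,l)}" "(x2, y2) \<in> {(k,j), (i,n), (m,l)}"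
          using mem3[of "(k,j)" "(i,n)" "(m,l)" w "(x1,y1)" "(x2,y2)"] A unfolding M1_def by auto
        have "x1 = i \<and> y1 = n \<and> x2 = m \<and> y2 = l"
          using mm lts assms(2-5) by auto
        then have False using A Lal al_ne unfolding fal_def by simp
        then show ?thesis ..
      next
        assume A: "lead_mon lt (fmin (x1, y1) (x2, y2) :: 'k pol) = mvar (x1, y2) + mvar (x2, y1) \<and>
              lex_less lt (mvar (x1, y1) + mvar (x2, y2)) (mvar (x1, y2) + mvar (x2, y1)) \<and>
              M1 = w + (mvar (x1, y2) + mvar (x2, y1))"
        have mm: "(x1, y2) \<in> {(k,j), (i,n), (m,l)}" "(x2, y1) \<in> {(k,j), (i,n), (m,l)}"
          using mem3[of "(k,j)" "(i,n)" "(m,l)" w "(x1,y2)" "(x2,y1)"] A unfolding M1_def by auto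
        consider "x1 = i \<and> y2 = n \<and> x2 = k \<and> y1 = j" | "x1 = m \<and> y2 = l \<and> x2 = k \<and> y1 = j"
          using mm lts assms(2-5) by auto
        then show ?thesis
        proof cases
          case 1 then show ?thesis using A M by (simp add: add.commute)
        next
          case 2 then show ?thesis using A M by (simp add: add.commute)
        qed
      qed
    qed
  next
    assume "(lex_less lt M1 M2 \<and> lex_less lt (mvar (m,j) + mvar (i,n)) (mvar (i,j) + mvar (m,n))) \<or>
     (lex_less lt M1 M2 \<and> lex_less lt (mvar (k,n) + mvar (m,l)) (mvar (m,n) + mvar (k,l))) \<or>
     (lex_less lt M2 M1 \<and> lex_less lt (mvar (k,n) + mvar (i,j)) (mvar (i,n) + mvar (k,j))) \<or>
     (lex_less lt M2 M1 \<and> lex_less lt (mvar (m,j) + mvar (k,l)) (mvar (k,j) + mvar (m,l)))"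
    note hyp = this
    let ?G = "inner_minors P"
    have i1: "inner_interval P (i,j) (m,n)" by (rule sub_inner[OF inn]) (use assms(2-5) in auto)
    have i2: "inner_interval P (m,j) (k,l)" by (rule sub_inner[OF inn]) (use assms(2-5) in auto)
    have i3: "inner_interval P (m,n) (k,l)" by (rule sub_inner[OF inn]) (use assms(2-5) in auto)
    have i4: "inner_interval P (i,j) (k,n)" by (rule sub_inner[OF inn]) (use assms(2-5) in auto)
    have G1: "(fmin (i,j) (m,n) :: 'k pol) \<in> ?G" using i1 unfolding inner_minors_def by blast
    have G2: "(fmin (m,j) (k,l) :: 'k pol) \<in> ?G" using i2 unfolding inner_minors_def by blast
    have G3: "(fmin (m,n) (k,l) :: 'k pol) \<in> ?G" using i3 unfolding inner_minors_def by blast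
    have G4: "(fmin (i,j) (k,n) :: 'k pol) \<in> ?G" using i4 unfolding inner_minors_def by blast
    have K1: "Poly_Mapping.keys (fmin (i,j) (m,n) :: 'k pol) = {mvar (i,j) + mvar (m,n), mvar (i,n) + mvar (m,j)}"
      using fmin_keys[of i m j n] assms(2-5) by simp
    have K2: "Poly_Mapping.keys (fmin (m,j) (k,l) :: 'k pol) = {mvar (m,j) + mvar (k,l), mvar (m,l) + mvar (k,j)}"
      using fmin_keys[of m k j l] assms(2-5) by simp
    have K3: "Poly_Mapping.keys (fmin (m,n) (k,l) :: 'k pol) = {mvar (m,n) + mvar (k,l), mvar (m,l) + mvar (k,n)}"
      using fmin_keys[of m k n l] assms(2-5) by simp
    have K4: "Poly_Mapping.keys (fmin (i,j) (k,n) :: 'k pol) = {mvar (i,j) + mvar (k,n), mvar (i,n) + mvar (k,j)}"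
      using fmin_keys[of i k j n] assms(2-5) by simp
    have n12: "(fmin (i,j) (m,n) :: 'k pol) \<noteq> fmin (m,j) (k,l)"
    proof
      assume "(fmin (i,j) (m,n) :: 'k pol) = fmin (m,j) (k,l)"
      then have "mvar (i,j) + mvar (m,n) \<in> {mvar (m,j) + mvar (k,l), mvar (m,l) + mvar (k,j)}"
        using K1 K2 by (metis insertI1)
      moreover have "mvar (i,j) + mvar (m,n) \<noteq> mvar (m,j) + mvar (k,l)" using ne by (intro mvar2_ne) auto
      moreover have "mvar (i,j) + mvar (m,n) \<noteq> mvar (m,l) + mvar (k,j)" using ne by (intro mvar2_ne) auto
      ultimately show False by auto
    qed
    have n34: "(fmin (m,n) (k,l) :: 'k pol) \<noteq> fmin (i,j) (k,n)"
    proof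
      assume "(fmin (m,n) (k,l) :: 'k pol) = fmin (i,j) (k,n)"
      then have "mvar (m,n) + mvar (k,l) \<in> {mvar (i,j) + mvar (k,n), mvar (i,n) + mvar (k,j)}"
        using K3 K4 by (metis insertI1)
      moreover have "mvar (m,n) + mvar (k,l) \<noteq> mvar (i,j) + mvar (k,n)" using ne by (intro mvar2_ne) auto
      moreover have "mvar (m,n) + mvar (k,l) \<noteq> mvar (i,n) + mvar (k,j)" using ne by (intro mvar2_ne) auto
      ultimately show False by auto
    qed
    have R1: "reduces_to_zero P lt ?G S"
      if h1: "lex_le lt (mvar (i,j) + mvar (m,n) + mvar (k,l)) (lead_mon lt S)"
        and h2: "lex_le lt (mvar (i,n) + mvar (m,j) + mvar (k,l)) (lead_mon lt S)"
        and h3: "lex_le lt (mvar (m,j) + mvar (k,l) + mvar (i,n)) (lead_mon lt S)"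
        and h4: "lex_le lt (mvar (m,l) + mvar (k,j) + mvar (i,n)) (lead_mon lt S)"
    proof (rule rtz_two[OF PO G1 G2 n12])
      show q1: "in_S P (Poly_Mapping.single (mvar (k,l)) (-1) :: 'k pol)" using in_S_single V by blast
      show q2: "in_S P (Poly_Mapping.single (mvar (i,n)) (-1) :: 'k pol)" using in_S_single V by blast
      show "in_S P (Poly_Mapping.single (mvar (k,l)) (-1) * fmin (i,j) (m,n) :: 'k pol)"
        using in_S_mult[OF q1 in_S_fmin[OF i1]] .
      show "in_S P (Poly_Mapping.single (mvar (i,n)) (-1) * fmin (m,j) (k,l) :: 'k pol)"
        using in_S_mult[OF q2 in_S_fmin[OF i2]] .
      show "S = Poly_Mapping.single (mvar (k,l)) (-1) * fmin (i,j) (m,n) + Poly_Mapping.single (mvar (i,n)) (-1) * fmin (m,j) (k,l)"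
        unfolding S_def M1_def M2_def by (rule E1_eq)
      show "\<forall>m\<in>Poly_Mapping.keys (Poly_Mapping.single (mvar (k,l)) (-1) * fmin (i,j) (m,n) :: 'k pol). lex_le lt m (lead_mon lt S)"
        using keys_cond[OF h1 h2, where c="-1"] by (simp add: fmin_eq)
      show "\<forall>m\<in>Poly_Mapping.keys (Poly_Mapping.single (mvar (i,n)) (-1) * fmin (m,j) (k,l) :: 'k pol). lex_le lt m (lead_mon lt S)"
        using keys_cond[OF h3 h4, where c="-1"] by (simp add: fmin_eq)
    qed
    have R2: "reduces_to_zero P lt ?G S"
      if h1: "lex_le lt (mvar (m,n) + mvar (k,l) + mvar (i,j)) (lead_mon lt S)"
        and h2: "lex_le lt (mvar (m,l) + mvar (k,n) + mvar (i,j)) (lead_mon lt S)"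
        and h3: "lex_le lt (mvar (i,j) + mvar (k,n) + mvar (m,l)) (lead_mon lt S)"
        and h4: "lex_le lt (mvar (i,n) + mvar (k,j) + mvar (m,l)) (lead_mon lt S)"
    proof (rule rtz_two[OF PO G3 G4 n34])
      show q1: "in_S P (Poly_Mapping.single (mvar (i,j)) (-1) :: 'k pol)" using in_S_single V by blast
      show q2: "in_S P (Poly_Mapping.single (mvar (m,l)) (-1) :: 'k pol)" using in_S_single V by blast
      show "in_S P (Poly_Mapping.single (mvar (i,j)) (-1) * fmin (m,n) (k,l) :: 'k pol)"
        using in_S_mult[OF q1 in_S_fmin[OF i3]] .
      show "in_S P (Poly_Mapping.single (mvar (m,l)) (-1) * fmin (i,j) (k,n) :: 'k pol)"
        using in_S_mult[OF q2 in_S_fmin[OF i4]] .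
      show "S = Poly_Mapping.single (mvar (i,j)) (-1) * fmin (m,n) (k,l) + Poly_Mapping.single (mvar (m,l)) (-1) * fmin (i,j) (k,n)"
        unfolding S_def M1_def M2_def by (rule E2_eq)
      show "\<forall>m\<in>Poly_Mapping.keys (Poly_Mapping.single (mvar (i,j)) (-1) * fmin (m,n) (k,l) :: 'k pol). lex_le lt m (lead_mon lt S)"
        using keys_cond[OF h1 h2, where c="-1"] by (simp add: fmin_eq)
      show "\<forall>m\<in>Poly_Mapping.keys (Poly_Mapping.single (mvar (m,l)) (-1) * fmin (i,j) (k,n) :: 'k pol). lex_le lt m (lead_mon lt S)"
        using keys_cond[OF h3 h4, where c="-1"] by (simp add: fmin_eq)
    qed
    from hyp show "reduces_to_zero P lt ?G S"
    proof (elim disjE conjE)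
      assume M: "lex_less lt M1 M2" and X: "lex_less lt (mvar (m,j) + mvar (i,n)) (mvar (i,j) + mvar (m,n))"
      note Y = lex_less_add[OF X, of "mvar (k,l)"]
      show ?thesis using M Y
        by (intro R1) (simp_all add: LS1[OF M] lex_le_def M1_def M2_def add_ac)
    next
      assume M: "lex_less lt M1 M2" and X: "lex_less lt (mvar (k,n) + mvar (m,l)) (mvar (m,n) + mvar (k,l))"
      note Y = lex_less_add[OF X, of "mvar (i,j)"]
      show ?thesis using M Y
        by (intro R2) (simp_all add: LS1[OF M] lex_le_def M1_def M2_def add_ac)
    next
      assume M: "lex_less lt M2 M1" and X: "lex_less lt (mvar (k,n) + mvar (i,j)) (mvar (i,n) + mvar (k,j))"
      note Y = lex_less_add[OF X, of "mvar (m,l)"]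
      show ?thesis using M Y
        by (intro R2) (simp_all add: LS2[OF M] lex_le_def M1_def M2_def add_ac)
    next
      assume M: "lex_less lt M2 M1" and X: "lex_less lt (mvar (m,j) + mvar (k,l)) (mvar (k,j) + mvar (m,l))"
      note Y = lex_less_add[OF X, of "mvar (i,n)"]
      show ?thesis using M Y
        by (intro R1) (simp_all add: LS2[OF M] lex_le_def M1_def M2_def add_ac)
    qed
  qed
  show ?thesis unfolding SP Let_def using main unfolding C1 C2 C3 C4 M1_def M2_def by simp
qed

end
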